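(* Let $X$ be a Banach space and $\{P_i\}_{i\in I}$ a family of (linear idempotent) projections on $X$. The following are equivalent: (a) $\{P_i\}_{i\in I}$ is uniformly convex, i.e. $\|P_i\|\le 1$ for every $i\in I$, and for every $\varepsilon>0$ there is $\delta(\varepsilon)>0$ such that $\|x-P_ix\|<\varepsilon$ for every $i\in I$ whenever $\|x\|=1$ and $\|x+P_ix\|>2-\delta(\varepsilon)$. (b) For every $\varepsilon>0$ there is $\delta(\varepsilon)>0$ such that $\|x-P_ix\|<\varepsilon$ for every $i\in I$ whenever $x\in B_X$ and $\|x\|-\|P_ix\|<\delta(\varepsilon)$. (c) For every $\varepsilon>0$ there is $\delta(\varepsilon)>0$ such that $\|x-P_ix\|<\varepsilon$ for every $i\in I$ whenever $\|x\|=1$ and $\|P_ix\|>1-\delta(\varepsilon)$. *)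

theory Defs
  imports "HOL-Analysis.Analysis"
begin

definition projection :: "('a::real_normed_vector \<Rightarrow> 'a) \<Rightarrow> bool" where
  "projection P \<longleftrightarrow> bounded_linear P \<and> P \<circ> P = P"

definition uniformly_convex_family ::
    "'i set \<Rightarrow> ('i \<Rightarrow> 'a::real_normed_vector \<Rightarrow> 'a) \<Rightarrow> bool" where
  "uniformly_convex_family I P \<longleftrightarrow>
     (\<forall>i\<in>I. onorm (P i) \<le> 1) \<and>
     (\<forall>\<epsilon>>0. \<exists>\<delta>>0. \<forall>i\<in>I. \<forall>x. norm x = 1 \<and> norm (x + P i x) > 2 - \<delta>
          \<longrightarrow> norm (x - P i x) < \<epsilon>)"

end

theory Submission
  imports Defs
begin

lemma proj_props:
  assumes "projection Q"
  shows "bounded_linear Q" "\<And>x. Q (Q x) = Q x"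
  using assms unfolding projection_def by (auto simp: fun_eq_iff)

lemma C_contr:
  fixes Q :: "'a::real_normed_vector \<Rightarrow> 'a"
  assumes bl: "bounded_linear Q"
    and C: "\<forall>\<epsilon>>0. \<exists>\<delta>>0. \<forall>x. norm x = 1 \<and> norm (Q x) > 1 - \<delta> \<longrightarrow> norm (x - Q x) < \<epsilon>"
  shows "norm (Q x) \<le> norm x"
proof (rule ccontr)
  assume h: "\<not> norm (Q x) \<le> norm x"
  have x0: "x \<noteq> 0" using h linear_0[OF bounded_linear.linear[OF bl]] by auto
  define y where "y = x /\<^sub>R norm x"
  have ny: "norm y = 1" using x0 by (simp add: y_def)
  have Qy: "Q y = Q x /\<^sub>R norm x" unfolding y_def using linear_scale[OF bounded_linear.linear[OF bl]] by simp
  have nQy: "norm (Q y) > 1" using h x0 by (simp add: Qy divide_simps)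
  have "\<forall>e>0. norm (y - Q y) < e"
  proof (intro allI impI)
    fix e :: real assume "e > 0"
    then obtain d where "d > 0" "\<forall>x. norm x = 1 \<and> norm (Q x) > 1 - d \<longrightarrow> norm (x - Q x) < e"
      using C by blast
    then show "norm (y - Q y) < e" using ny nQy by auto
  qed
  then have "norm (y - Q y) \<le> 0"
    using not_le by (metis less_irrefl)
  then have "y = Q y" by simp
  then show False using ny nQy by simp
qed

lemma onorm_le1:
  fixes Q :: "'a::real_normed_vector \<Rightarrow> 'b::real_normed_vector"
  assumes "\<And>x. norm (Q x) \<le> norm x"
  shows "onorm Q \<le> 1"
  unfolding onorm_def
proof (rule cSUP_least)
  fix x
  show "norm (Q x) / norm x \<le> 1"
    using assms[of x] by (cases "x = 0") (auto simp: divide_le_eq)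
qed simp

theorem theorem3p5:
  fixes I :: "'i set" and P :: "'i \<Rightarrow> 'a::banach \<Rightarrow> 'a"
  assumes "\<forall>i\<in>I. projection (P i)"
  shows "(uniformly_convex_family I P
            \<longleftrightarrow> (\<forall>\<epsilon>>0. \<exists>\<delta>>0. \<forall>i\<in>I. \<forall>x. norm x \<le> 1 \<and> norm x - norm (P i x) < \<delta>
                    \<longrightarrow> norm (x - P i x) < \<epsilon>))
       \<and> (uniformly_convex_family I P
            \<longleftrightarrow> (\<forall>\<epsilon>>0. \<exists>\<delta>>0. \<forall>i\<in>I. \<forall>x. norm x = 1 \<and> norm (P i x) > 1 - \<delta>
                    \<longrightarrow> norm (x - P i x) < \<epsilon>))"
proof -
  have bl: "\<And>i. i \<in> I \<Longrightarrow> bounded_linear (P i)" using assms proj_props by blast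
  have idem: "\<And>i x. i \<in> I \<Longrightarrow> P i (P i x) = P i x" using assms proj_props by blast
  let ?A = "uniformly_convex_family I P"
  let ?B = "\<forall>\<epsilon>>0. \<exists>\<delta>>0. \<forall>i\<in>I. \<forall>x. norm x \<le> 1 \<and> norm x - norm (P i x) < \<delta>
                    \<longrightarrow> norm (x - P i x) < \<epsilon>"
  let ?C = "\<forall>\<epsilon>>0. \<exists>\<delta>>0. \<forall>i\<in>I. \<forall>x. norm x = 1 \<and> norm (P i x) > 1 - \<delta>
                    \<longrightarrow> norm (x - P i x) < \<epsilon>"
  have Cle: "norm (P i x) \<le> norm x" if C: ?C and i: "i \<in> I" for i x
  proof (rule C_contr[OF bl[OF i]], intro allI impI)
    fix e :: real assume "e > 0"
    then obtain d where "d > 0" "\<forall>i\<in>I. \<forall>x. norm x = 1 \<and> norm (P i x) > 1 - d \<longrightarrow> norm (x - P i x) < e"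
      using C by blast
    then show "\<exists>d>0. \<forall>x. norm x = 1 \<and> 1 - d < norm (P i x) \<longrightarrow> norm (x - P i x) < e"
      using i by blast
  qed
  have BC: "?B \<Longrightarrow> ?C"
  proof (intro allI impI)
    fix e :: real assume B: ?B and e: "e > 0"
    then obtain d where "d > 0" "\<forall>i\<in>I. \<forall>x. norm x \<le> 1 \<and> norm x - norm (P i x) < d \<longrightarrow> norm (x - P i x) < e"
      by blast
    then show "\<exists>d>0. \<forall>i\<in>I. \<forall>x. norm x = 1 \<and> norm (P i x) > 1 - d \<longrightarrow> norm (x - P i x) < e"
      by (intro exI[of _ d]) auto
  qed
  have CB: "?C \<Longrightarrow> ?B"
  proof (intro allI impI)
    fix e :: real assume C: ?C and e: "e > 0"
    then obtain d where d: "d > 0" "\<forall>i\<in>I. \<forall>x. norm x = 1 \<and> norm (P i x) > 1 - d \<longrightarrow> norm (x - P i x) < e"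
      by blast
    show "\<exists>d>0. \<forall>i\<in>I. \<forall>x. norm x \<le> 1 \<and> norm x - norm (P i x) < d \<longrightarrow> norm (x - P i x) < e"
    proof (intro exI[of _ "d * e / 2"] conjI ballI allI impI)
      show "d * e / 2 > 0" using d e by simp
      fix i x assume i: "i \<in> I" and hx: "norm x \<le> 1 \<and> norm x - norm (P i x) < d * e / 2"
      show "norm (x - P i x) < e"
      proof (cases "norm x < e / 2")
        case True
        have "norm (x - P i x) \<le> norm x + norm (P i x)" by (rule norm_triangle_ineq4)
        also have "\<dots> \<le> 2 * norm x" using Cle[OF C i, of x] by simp
        finally show ?thesis using True by simp
      next
        case False
        then have nx: "norm x \<ge> e / 2" by simp
        then have x0: "norm x > 0" using e by linarith
        define y where "y = x /\<^sub>R norm x"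
        have ny: "norm y = 1" using x0 by (simp add: y_def)
        have Qy: "P i y = P i x /\<^sub>R norm x" unfolding y_def using linear_scale[OF bounded_linear.linear[OF bl[OF i]]] by simp
        have "norm x - norm (P i x) < d * norm x"
        proof -
          have "d * e / 2 \<le> d * norm x" using nx d(1) by simp
          then show ?thesis using hx by linarith
        qed
        then have "norm (P i x) / norm x > 1 - d" using x0 by (simp add: field_simps)
        then have "norm (P i y) > 1 - d" using x0 by (simp add: Qy divide_inverse mult.commute)
        then have "norm (y - P i y) < e" using d(2) i ny by blast
        moreover have "x - P i x = norm x *\<^sub>R (y - P i y)"
          using x0 unfolding scaleR_diff_right Qy by (simp add: y_def)
        ultimately have "norm (x - P i x) < e * norm x" using x0 by (simp add: mult.commute)
        also have "\<dots> \<le> e" using hx e by (simp add: mult_left_le)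
        finally show ?thesis .
      qed
    qed
  qed
  have AC: "?A \<Longrightarrow> ?C"
  proof (intro allI impI)
    fix e :: real assume A: ?A and e: "e > 0"
    then have on: "\<forall>i\<in>I. onorm (P i) \<le> 1" unfolding uniformly_convex_family_def by blast
    from A e obtain d where d: "d > 0" "\<forall>i\<in>I. \<forall>x. norm x = 1 \<and> norm (x + P i x) > 2 - d \<longrightarrow> norm (x - P i x) < e"
      unfolding uniformly_convex_family_def by blast
    show "\<exists>d>0. \<forall>i\<in>I. \<forall>x. norm x = 1 \<and> norm (P i x) > 1 - d \<longrightarrow> norm (x - P i x) < e"
    proof (intro exI[of _ "d / 2"] conjI ballI allI impI)
      show "d / 2 > 0" using d by simp
      fix i x assume i: "i \<in> I" and hx: "norm x = 1 \<and> norm (P i x) > 1 - d / 2"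
      have "P i (x + P i x) = 2 *\<^sub>R P i x"
        using linear_add[OF bounded_linear.linear[OF bl[OF i]]] idem[OF i] by (simp add: scaleR_2)
      moreover have "norm (P i (x + P i x)) \<le> onorm (P i) * norm (x + P i x)"
        by (rule onorm[OF bl[OF i]])
      moreover have "onorm (P i) * norm (x + P i x) \<le> norm (x + P i x)"
        using on i mult_right_mono[of "onorm (P i)" 1 "norm (x + P i x)"] by simp
      ultimately have "2 * norm (P i x) \<le> norm (x + P i x)" by simp
      then have "norm (x + P i x) > 2 - d" using hx by linarith
      then show "norm (x - P i x) < e" using d(2) i hx by blast
    qed
  qed
  have CA: "?C \<Longrightarrow> ?A"
    unfolding uniformly_convex_family_def
  proof (intro conjI ballI allI impI)
    fix i assume C: ?C and i: "i \<in> I"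
    show "onorm (P i) \<le> 1" by (rule onorm_le1) (use Cle[OF C i] in auto)
  next
    fix e :: real assume C: ?C and e: "e > 0"
    then obtain d where d: "d > 0" "\<forall>i\<in>I. \<forall>x. norm x = 1 \<and> norm (P i x) > 1 - d \<longrightarrow> norm (x - P i x) < e"
      by blast
    show "\<exists>d>0. \<forall>i\<in>I. \<forall>x. norm x = 1 \<and> norm (x + P i x) > 2 - d \<longrightarrow> norm (x - P i x) < e"
    proof (intro exI[of _ d] conjI ballI allI impI)
      show "d > 0" by fact
      fix i x assume i: "i \<in> I" and hx: "norm x = 1 \<and> norm (x + P i x) > 2 - d"
      have "norm (x + P i x) \<le> norm x + norm (P i x)" by (rule norm_triangle_ineq)
      then have "norm (P i x) > 1 - d" using hx by linarith
      then show "norm (x - P i x) < e" using d(2) i hx by blast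
    qed
  qed
  show ?thesis using AC CA BC CB by blast
qed

end
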